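(* Let $\phi(\mathbf x,\theta)=\arccos\big((\operatorname{trace}(\theta^\top\mathbf x)-1)/2\big)$ for $\mathbf x,\theta\in\mathrm{SO}(3)$, and let $h\colon L^\infty(\mathrm{SO}(3))\to\mathbb R$ be bounded (maps bounded sets to bounded sets) with $h(g\circ\psi)=h(g)$ for all $g\in L^\infty(\mathrm{SO}(3))$ and every bijection $\psi\colon\mathrm{SO}(3)\to\mathrm{SO}(3)$. Let $\mu_0,\nu_0\in\mathcal P^+_{\phi,c}(\mathrm{SO}(3))$ satisfy $\mathcal N_{h,\phi}[\mu_0]\neq\mathcal N_{h,\phi}[\nu_0]$ and consider $$\mathbb F=\{(\mathbf R\cdot)_\#\mu_0:\mathbf R\in\mathrm{SO}(3)\},\qquad \mathbb G=\{(\mathbf R\cdot)_\#\nu_0:\mathbf R\in\mathrm{SO}(3)\}.$$ Then $\mathbb F,\mathbb G\subset\mathcal P^+_{\phi,c}(\mathrm{SO}(3))$, and $\mathcal N_{h,\phi}[\mathbb F]$ and $\mathcal N_{h,\phi}[\mathbb G]$ are linearly separable in $L^\infty_\rho(\mathbb R)$.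
   Context: For $\theta\in\mathrm{SO}(3)$ and a finite Borel measure $\mu$ on $\mathrm{SO}(3)$, the restricted Radon transform on $\mathrm{SO}(3)$ is $\mathcal R_{\phi,\theta}[\mu]=(\phi(\cdot,\theta))_\#\mu$. Fix a reference Borel probability measure $\rho$ on $\mathbb R$ without atoms. For a probability measure $\nu$ on $\mathbb R$ with $F_\nu(t)=\nu((-\infty,t])$, let $F_\nu^{[-1]}(t)=\inf\{s:F_\nu(s)>t\}$ and the CDT $\hat\nu=F_\nu^{[-1]}\circ F_\rho$; $\widehat{\mathcal R}_{\phi,\theta}[\mu]$ is the CDT of $\mathcal R_{\phi,\theta}[\mu]$. For $g\in L^2_\rho(\mathbb R)$, $\operatorname{mean}(g)=\int g\,\mathrm d\rho$, $\operatorname{std}(g)=(\int|g-\operatorname{mean}(g)|^2\mathrm d\rho)^{1/2}$; for a probability measure on $\mathbb R$, $\operatorname{std}$ is its standard deviation. $\mathcal P^+_{\phi,c}(\mathrm{SO}(3))$ is the set of Borel probability measures $\mu$ on $\mathrm{SO}(3)$ for which there is $c>0$ with $\operatorname{std}(\mathcal R_{\phi,\theta}[\mu])\ge c$ for all $\theta\in\mathrm{SO}(3)$. For such $\mu$, $\mathcal N_\phi[\mu](t,\theta)=\big(\widehat{\mathcal R}_{\phi,\theta}[\mu](t)-\operatorname{mean}(\widehat{\mathcal R}_{\phi,\theta}[\mu])\big)/\operatorname{std}(\widehat{\mathcal R}_{\phi,\theta}[\mu])$ and $\mathcal N_{h,\phi}[\mu](t)=h(\mathcal N_\phi[\mu](t,\cdot))$.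 Subsets $A,B$ of a normed space $V$ are linearly separable if there exist a continuous linear functional $\ell$ on $V$ and $c\in\mathbb R$ with $\ell>c$ on $A$ and $\ell<c$ on $B$.
   Formalization: The functions $\mathcal N_{h,\phi}[\mu_0]$ and $\mathcal N_{h,\phi}[\nu_0]$ are also assumed Borel measurable, and $\mathcal N_{h,\phi}[\mu_0]\neq\mathcal N_{h,\phi}[\nu_0]$ means that they differ on a set of positive $\rho$-measure. Each condition added here is assumed in the paper as well or is needed for the statement above to hold. *)

theory Defs
  imports "HOL-Analysis.Analysis" "HOL-Probability.Probability"
begin

type_synonym mat3 = "real^3^3"

definition SO3 :: "mat3 set" where
  "SO3 = {A. orthogonal_matrix A \<and> det A = 1}"

definition phi :: "mat3 \<Rightarrow> mat3 \<Rightarrow> real" where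
  "phi x \<theta> = arccos ((trace (transpose \<theta> ** x) - 1) / 2)"

definition prob_SO3 :: "mat3 measure \<Rightarrow> bool" where
  "prob_SO3 \<mu> \<longleftrightarrow> sets \<mu> = sets (restrict_space borel SO3) \<and> prob_space \<mu>"

definition radon :: "mat3 measure \<Rightarrow> mat3 \<Rightarrow> real measure" where
  "radon \<mu> \<theta> = distr \<mu> borel (\<lambda>x. phi x \<theta>)"

definition std_meas :: "real measure \<Rightarrow> real" where
  "std_meas \<nu> = sqrt (\<integral>x. (x - (\<integral>y. y \<partial>\<nu>))\<^sup>2 \<partial>\<nu>)"

definition cdf_inv :: "real measure \<Rightarrow> real \<Rightarrow> real" where
  "cdf_inv \<nu> t = Inf {s. cdf \<nu> s > t}"

definition cdt :: "real measure \<Rightarrow> real measure \<Rightarrow> real \<Rightarrow> real" where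
  "cdt \<rho> \<nu> = cdf_inv \<nu> \<circ> cdf \<rho>"

definition mean_fn :: "real measure \<Rightarrow> (real \<Rightarrow> real) \<Rightarrow> real" where
  "mean_fn \<rho> g = (\<integral>t. g t \<partial>\<rho>)"

definition std_fn :: "real measure \<Rightarrow> (real \<Rightarrow> real) \<Rightarrow> real" where
  "std_fn \<rho> g = sqrt (\<integral>t. \<bar>g t - mean_fn \<rho> g\<bar>\<^sup>2 \<partial>\<rho>)"

definition P_plus :: "mat3 measure set" where
  "P_plus = {\<mu>. prob_SO3 \<mu> \<and> (\<exists>c>0. \<forall>\<theta>\<in>SO3. std_meas (radon \<mu> \<theta>) \<ge> c)}"

definition N_phi :: "real measure \<Rightarrow> mat3 measure \<Rightarrow> real \<Rightarrow> mat3 \<Rightarrow> real" where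
  "N_phi \<rho> \<mu> t \<theta> =
     (cdt \<rho> (radon \<mu> \<theta>) t - mean_fn \<rho> (cdt \<rho> (radon \<mu> \<theta>)))
       / std_fn \<rho> (cdt \<rho> (radon \<mu> \<theta>))"

definition N_h :: "((mat3 \<Rightarrow> real) \<Rightarrow> real) \<Rightarrow> real measure \<Rightarrow> mat3 measure \<Rightarrow> real \<Rightarrow> real" where
  "N_h h \<rho> \<mu> t = h (\<lambda>\<theta>. N_phi \<rho> \<mu> t \<theta>)"

definition rot :: "mat3 \<Rightarrow> mat3 measure \<Rightarrow> mat3 measure" where
  "rot R \<mu> = distr \<mu> (restrict_space borel SO3) (\<lambda>x. R ** x)"

text \<open>Representatives of elements of L^infty_rho(R): Borel measurable, essentially bounded\<close>
definition Linf :: "real measure \<Rightarrow> (real \<Rightarrow> real) set" where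
  "Linf \<rho> = {f. f \<in> borel_measurable \<rho> \<and> (\<exists>B. AE t in \<rho>. \<bar>f t\<bar> \<le> B)}"

text \<open>Continuous linear functionals on L^infty_rho(R): linear, and
  |l f| <= C * ||f||_infty, expressed via every a.e. bound B of |f|.\<close>
definition cont_lin_Linf :: "real measure \<Rightarrow> ((real \<Rightarrow> real) \<Rightarrow> real) \<Rightarrow> bool" where
  "cont_lin_Linf \<rho> L \<longleftrightarrow>
     (\<forall>f\<in>Linf \<rho>. \<forall>g\<in>Linf \<rho>. L (\<lambda>t. f t + g t) = L f + L g) \<and>
     (\<forall>a. \<forall>f\<in>Linf \<rho>. L (\<lambda>t. a * f t) = a * L f) \<and>
     (\<exists>C. \<forall>f\<in>Linf \<rho>. \<forall>B. (AE t in \<rho>. \<bar>f t\<bar> \<le> B) \<longrightarrow> \<bar>L f\<bar> \<le> C * B)"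

definition lin_separable_Linf :: "real measure \<Rightarrow> (real \<Rightarrow> real) set \<Rightarrow> (real \<Rightarrow> real) set \<Rightarrow> bool" where
  "lin_separable_Linf \<rho> A B \<longleftrightarrow> A \<subseteq> Linf \<rho> \<and> B \<subseteq> Linf \<rho> \<and>
     (\<exists>L c. cont_lin_Linf \<rho> L \<and> (\<forall>f\<in>A. L f > c) \<and> (\<forall>f\<in>B. L f < c))"

end

theory Submission
  imports Defs
begin


lemma (in real_distribution) cdf_cont_noat:
  assumes noat: "\<forall>t. measure M {t} = 0"
  shows "continuous_on UNIV (cdf M)"
  using noat isCont_cdf continuous_at_imp_continuous_on by blast

lemma (in real_distribution) measure_lessThan_noat:
  assumes noat: "\<forall>t. measure M {t} = 0"
  shows "measure M {..<v} = cdf M v"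
proof -
  have "{..<v} = {..v} - {v}" by auto
  then have "measure M {..<v} = measure M {..v} - measure M {v}"
    by (simp add: finite_measure_Diff)
  then show ?thesis using noat by (simp add: cdf_def)
qed

lemma (in real_distribution) cdf_meas_borel: "cdf M \<in> borel_measurable borel"
  using borel_measurable_mono[of "cdf M"] cdf_nondecreasing
  by (simp add: mono_def)

lemma (in real_distribution) cdf_meas: "cdf M \<in> borel_measurable M"
  using cdf_meas_borel measurable_cong_sets[OF events_eq_borel refl] by simp

lemma (in real_distribution) le_a:
  assumes noat: "\<forall>t. measure M {t} = 0" and a0: "0 \<le> a" and a1: "a < 1"
  shows "measure M {t. cdf M t \<le> a} \<le> a"
proof -
  define D where "D = {t. cdf M t \<le> a}"
  have cl: "closed D" unfolding D_def
    by (intro closed_Collect_le continuous_on_const) (rule cdf_cont_noat[OF noat])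
  have "\<forall>\<^sub>F x in at_top. cdf M x > a"
    using cdf_lim_at_top_prob a1 order_tendstoD(1) by blast
  then obtain t1 where t1: "cdf M t1 > a" by (meson eventually_at_top_linorder order_refl)
  have bdd: "bdd_above D"
  proof (rule bdd_aboveI[of _ t1])
    fix d assume "d \<in> D"
    then show "d \<le> t1" using t1 cdf_nondecreasing[of t1 d] unfolding D_def by force
  qed
  show ?thesis
  proof (cases "D = {}")
    case True then show ?thesis using a0 by (simp add: D_def)
  next
    case False
    define u where "u = Sup D"
    have uD: "u \<in> D" unfolding u_def using closed_contains_Sup[OF False bdd cl] .
    have "D \<subseteq> {..u}" unfolding u_def using bdd cSup_upper by auto
    then have "measure M D \<le> measure M {..u}"
      by (intro finite_measure_mono) auto
    also have "\<dots> = cdf M u" by (simp add: cdf_def)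
    also have "\<dots> \<le> a" using uD by (simp add: D_def)
    finally show ?thesis by (simp add: D_def)
  qed
qed

lemma (in real_distribution) lt_a:
  assumes noat: "\<forall>t. measure M {t} = 0" and a0: "0 < a" and a1: "a \<le> 1"
  shows "a \<le> measure M {t. cdf M t < a}"
proof -
  define E where "E = {t. cdf M t < a}"
  have op: "open E" unfolding E_def
    by (intro open_Collect_less continuous_on_const) (rule cdf_cont_noat[OF noat])
  show ?thesis
  proof (cases "E = UNIV")
    case True then show ?thesis using a1 prob_space by (simp add: E_def[symmetric])
  next
    case False
    then obtain t0 where t0: "t0 \<notin> E" by auto
    have bdd: "bdd_above E"
    proof (rule bdd_aboveI[of _ t0])
      fix e assume "e \<in> E"
      then show "e \<le> t0" using t0 cdf_nondecreasing[of t0 e] unfolding E_def by force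
    qed
    have "\<forall>\<^sub>F x in at_bot. cdf M x < a"
      using cdf_lim_at_bot a0 order_tendstoD(2) by blast
    then obtain t1 where "\<And>x. x \<le> t1 \<Longrightarrow> cdf M x < a" by (meson eventually_at_bot_linorder)
    then have ne: "E \<noteq> {}" unfolding E_def by blast
    define v where "v = Sup E"
    have vE: "v \<notin> E"
    proof
      assume "v \<in> E"
      then obtain e where "e > 0" "ball v e \<subseteq> E" using op open_contains_ball by blast
      then have "v + e/2 \<in> E" by (auto simp: dist_real_def)
      then have "v + e/2 \<le> v" unfolding v_def using bdd cSup_upper by blast
      then show False using \<open>e > 0\<close> by simp
    qed
    have sub: "{..<v} \<subseteq> E"
    proof
      fix y assume "y \<in> {..<v}"
      then obtain e where "e \<in> E" "y < e" using less_cSup_iff[OF ne bdd] v_def by auto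
      then show "y \<in> E" unfolding E_def using cdf_nondecreasing[of y e] by auto
    qed
    have "a \<le> cdf M v" using vE by (simp add: E_def)
    also have "\<dots> = measure M {..<v}" using measure_lessThan_noat[OF noat] by simp
    also have "\<dots> \<le> measure M E"
    proof (intro finite_measure_mono sub)
      have "cdf M -` {..<a} \<inter> space M \<in> sets M"
        by (rule measurable_sets[OF cdf_meas]) simp
      moreover have "cdf M -` {..<a} \<inter> space M = E" by (auto simp: E_def)
      ultimately show "E \<in> sets M" by simp
    qed
    finally show ?thesis by (simp add: E_def)
  qed
qed




context
  fixes \<nu> :: "real measure" and lo hi :: real
  assumes nu: "real_distribution \<nu>" and lo: "\<forall>y<lo. cdf \<nu> y = 0" and hi: "cdf \<nu> hi = 1"
begin

lemma S_props:
  assumes s0: "0 \<le> s" and s1: "s < 1"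
  shows "hi \<in> {y. cdf \<nu> y > s}" and "bdd_below {y. cdf \<nu> y > s}"
    and "\<And>y. y \<in> {y. cdf \<nu> y > s} \<Longrightarrow> lo \<le> y"
proof -
  show "hi \<in> {y. cdf \<nu> y > s}" using hi s1 by simp
  show lo': "\<And>y. y \<in> {y. cdf \<nu> y > s} \<Longrightarrow> lo \<le> y"
    using lo s0 by (metis mem_Collect_eq not_le not_less)
  then show "bdd_below {y. cdf \<nu> y > s}" by (meson bdd_below.I)
qed

lemma Q1: assumes "0 \<le> s" "s < 1" shows "lo \<le> cdf_inv \<nu> s" "cdf_inv \<nu> s \<le> hi"
proof -
  note S = S_props[OF assms]
  show "cdf_inv \<nu> s \<le> hi" unfolding cdf_inv_def using S(1,2) by (rule cInf_lower)
  show "lo \<le> cdf_inv \<nu> s" unfolding cdf_inv_def using S(1,3)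
    by (intro cInf_greatest) auto
qed

lemma nu_mono: "x \<le> y \<Longrightarrow> cdf \<nu> x \<le> cdf \<nu> y"
  using nu real_distribution.finite_borel_measure_M finite_borel_measure.cdf_nondecreasing by blast

lemma nu_rc: "continuous (at_right x) (cdf \<nu>)"
  using nu real_distribution.finite_borel_measure_M finite_borel_measure.cdf_is_right_cont by blast

lemma Q2': assumes "0 \<le> s" "s < 1" "cdf \<nu> x > s" shows "cdf_inv \<nu> s \<le> x"
proof -
  note S = S_props[OF assms(1,2)]
  show ?thesis unfolding cdf_inv_def using assms(3) S(2) by (intro cInf_lower) auto
qed

lemma Q3: assumes "0 \<le> s" "s < 1" "cdf_inv \<nu> s \<le> x" shows "s \<le> cdf \<nu> x"
proof -
  note S = S_props[OF assms(1,2)]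
  have ev: "\<forall>\<^sub>F y in at_right x. s \<le> cdf \<nu> y"
    using eventually_at_right_less[of x]
  proof (rule eventually_mono)
    fix y assume "x < y"
    then have "Inf {y. cdf \<nu> y > s} < y" using assms(3) unfolding cdf_inv_def by simp
    then obtain z where "cdf \<nu> z > s" "z < y"
      using cInf_less_iff[of "{y. cdf \<nu> y > s}"] S(1,2) by blast
    then show "s \<le> cdf \<nu> y"
      using nu_mono[of z y] by simp
  qed
  have "(cdf \<nu> \<longlongrightarrow> cdf \<nu> x) (at_right x)"
    using nu_rc[of x] by (simp add: continuous_within)
  then show ?thesis using ev by (rule tendsto_lowerbound) simp
qed

lemma Q4: assumes "0 \<le> s1" "s1 \<le> s2" "s2 < 1" shows "cdf_inv \<nu> s1 \<le> cdf_inv \<nu> s2"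
proof -
  note S1 = S_props[of s1] and S2 = S_props[of s2]
  show ?thesis unfolding cdf_inv_def
    using assms S1 S2 by (intro cInf_superset_mono) auto
qed

lemma Q5: assumes "1 \<le> s" shows "cdf_inv \<nu> s = Inf {}"
proof -
  have "{y. cdf \<nu> y > s} = {}"
    using real_distribution.cdf_bounded_prob[OF nu] assms by (auto simp: not_less intro: order_trans)
  then show ?thesis by (simp add: cdf_inv_def)
qed

lemma quantile:
  assumes rho: "real_distribution \<rho>" and noat: "\<forall>t. measure \<rho> {t} = 0"
  shows "cdt \<rho> \<nu> \<in> borel_measurable borel"
    and "\<And>t. cdt \<rho> \<nu> t \<in> {lo..hi} \<union> {Inf {}}"
    and "distr \<rho> borel (cdt \<rho> \<nu>) = \<nu>"
proof -
  interpret r: real_distribution \<rho> by (rule rho)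
  define G where "G = cdf \<rho>"
  have G0: "0 \<le> G t" for t unfolding G_def by (rule r.cdf_nonneg)
  have G1: "G t \<le> 1" for t unfolding G_def by (rule r.cdf_bounded_prob)
  have Gm: "t1 \<le> t2 \<Longrightarrow> G t1 \<le> G t2" for t1 t2 unfolding G_def by (rule r.cdf_nondecreasing)
  define T' where "T' t = (if G t < 1 then cdf_inv \<nu> (G t) else hi)" for t
  have "mono T'"
  proof (rule monoI)
    fix t1 t2 :: real assume "t1 \<le> t2"
    then have g: "G t1 \<le> G t2" by (rule Gm)
    show "T' t1 \<le> T' t2"
    proof (cases "G t2 < 1")
      case True
      then show ?thesis using g G0 Q4[of "G t1" "G t2"] by (simp add: T'_def)
    next
      case False
      then show ?thesis using Q1(2)[of "G t1"] G0 by (simp add: T'_def)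
    qed
  qed
  then have [measurable]: "T' \<in> borel_measurable borel" by (rule borel_measurable_mono)
  have [measurable]: "G \<in> borel_measurable borel" unfolding G_def by (rule r.cdf_meas_borel)
  have Teq: "cdt \<rho> \<nu> = (\<lambda>t. if G t < 1 then T' t else Inf {})"
  proof
    fix t show "cdt \<rho> \<nu> t = (if G t < 1 then T' t else Inf {})"
      using Q5[of "G t"] by (simp add: cdt_def G_def T'_def)
  qed
  show Tm: "cdt \<rho> \<nu> \<in> borel_measurable borel" unfolding Teq by measurable
  show "\<And>t. cdt \<rho> \<nu> t \<in> {lo..hi} \<union> {Inf {}}"
    using Q1 G0 by (simp add: Teq T'_def)
  have Tm': "cdt \<rho> \<nu> \<in> borel_measurable \<rho>"
    using Tm measurable_cong_sets[OF r.events_eq_borel refl] by simp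
  have rd: "real_distribution (distr \<rho> borel (cdt \<rho> \<nu>))"
    using Tm' by (rule r.real_distribution_distr)
  show "distr \<rho> borel (cdt \<rho> \<nu>) = \<nu>"
  proof (rule cdf_unique[OF rd nu], rule ext)
    fix x
    define T where "T = cdt \<rho> \<nu>"
    have "cdf (distr \<rho> borel T) x = measure \<rho> (T -` {..x} \<inter> space \<rho>)"
      unfolding cdf_def using Tm' by (simp add: measure_distr T_def)
    also have "\<dots> = measure \<rho> {t. T t \<le> x}" by (rule arg_cong[where f="measure \<rho>"]) auto
    finally have c: "cdf (distr \<rho> borel T) x = measure \<rho> {t. T t \<le> x}" .
    define a where "a = cdf \<nu> x"
    have a0: "0 \<le> a" and a1: "a \<le> 1" unfolding a_def
      using nu real_distribution.finite_borel_measure_M finite_borel_measure.cdf_nonneg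
        real_distribution.cdf_bounded_prob by blast+
    have sT: "{t. T t \<le> x} \<in> sets \<rho>"
      using Tm' unfolding T_def by measurable
    have sL: "{t. G t < a} \<in> sets \<rho>"
      by (simp add: measurable_cong_sets[OF r.events_eq_borel refl])
    have sU: "{t. G t \<le> a} \<in> sets \<rho>"
      by (simp add: measurable_cong_sets[OF r.events_eq_borel refl])
    have sV: "{t. 1 \<le> G t} \<in> sets \<rho>"
      by (simp add: measurable_cong_sets[OF r.events_eq_borel refl])
    have lower: "a \<le> measure \<rho> {t. T t \<le> x}"
    proof (cases "a = 0")
      case True then show ?thesis by simp
    next
      case False
      then have "a \<le> measure \<rho> {t. G t < a}" unfolding G_def using r.lt_a[OF noat] a0 a1 by simp
      also have "\<dots> \<le> measure \<rho> {t. T t \<le> x}"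
      proof (rule r.finite_measure_mono[OF _ sT])
        show "{t. G t < a} \<subseteq> {t. T t \<le> x}"
        proof
          fix t assume "t \<in> {t. G t < a}"
          then have "G t < a" by simp
          then show "t \<in> {t. T t \<le> x}"
            using Q2'[of "G t" x] G0[of t] a1 by (simp add: T_def cdt_def G_def a_def)
        qed
      qed
      finally show ?thesis .
    qed
    have upper: "measure \<rho> {t. T t \<le> x} \<le> a"
    proof (cases "a = 1")
      case True then show ?thesis by (simp add: r.measure_le_1)
    next
      case False
      then have a1': "a < 1" using a1 by simp
      have "measure \<rho> {t. 1 \<le> G t} = 0"
      proof -
        have "{t. 1 \<le> G t} = space \<rho> - {t. G t < 1}" by auto
        have "measure \<rho> {t. 1 \<le> G t} = 1 - measure \<rho> {t. G t < 1}"
        proof -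
          have sL1: "{t. G t < 1} \<in> sets \<rho>"
            by (simp add: measurable_cong_sets[OF r.events_eq_borel refl])
          show ?thesis using r.prob_compl[OF sL1] \<open>{t. 1 \<le> G t} = space \<rho> - {t. G t < 1}\<close> by simp
        qed
        moreover have "1 \<le> measure \<rho> {t. G t < 1}" unfolding G_def using r.lt_a[OF noat, of 1] by simp
        moreover have "0 \<le> measure \<rho> {t. 1 \<le> G t}" by simp
        ultimately show ?thesis by linarith
      qed
      have "{t. T t \<le> x} \<subseteq> {t. G t \<le> a} \<union> {t. 1 \<le> G t}"
      proof
        fix t assume "t \<in> {t. T t \<le> x}"
        then have "cdf_inv \<nu> (G t) \<le> x" by (simp add: T_def cdt_def G_def)
        then show "t \<in> {t. G t \<le> a} \<union> {t. 1 \<le> G t}"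
          using Q3[of "G t" x] G0[of t] by (cases "G t < 1") (auto simp: a_def)
      qed
      then have "measure \<rho> {t. T t \<le> x} \<le> measure \<rho> ({t. G t \<le> a} \<union> {t. 1 \<le> G t})"
        using sU sV by (intro r.finite_measure_mono) auto
      also have "\<dots> \<le> measure \<rho> {t. G t \<le> a} + measure \<rho> {t. 1 \<le> G t}"
        using sU sV by (intro measure_subadditive) (auto simp: r.emeasure_eq_measure)
      also have "\<dots> \<le> a" using r.le_a[OF noat a0 a1'] \<open>measure \<rho> {t. 1 \<le> G t} = 0\<close>
        by (simp add: G_def)
      finally show ?thesis .
    qed
    show "cdf (distr \<rho> borel (cdt \<rho> \<nu>)) x = cdf \<nu> x"
      using c lower upper by (simp add: T_def a_def)
  qed
qed

end



definition c0 :: real where "c0 = The (\<lambda>x::real. False)"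

lemma arccos_range: "arccos y \<in> {0..pi} \<union> {c0}"
proof (cases "-1 \<le> y \<and> y \<le> 1")
  case True then show ?thesis using arccos_bounded by auto
next
  case False
  have "(\<lambda>x. 0 \<le> x \<and> x \<le> pi \<and> cos x = y) = (\<lambda>x. False)"
    using False cos_ge_minus_one cos_le_one by (metis)
  then show ?thesis by (simp add: arccos_def c0_def)
qed

lemma arccos_meas: "arccos \<in> borel_measurable borel"
proof -
  have "arccos = (\<lambda>y. if y \<in> {-1..1} then arccos y else c0)"
  proof
    fix y show "arccos y = (if y \<in> {-1..1} then arccos y else c0)"
    proof (cases "y \<in> {-1..1}")
      case False
      have "(\<lambda>x. 0 \<le> x \<and> x \<le> pi \<and> cos x = y) = (\<lambda>x. False)"
        using False cos_ge_minus_one cos_le_one by (metis atLeastAtMost_iff)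
      then show ?thesis using False by (simp add: arccos_def c0_def)
    qed simp
  qed
  also have "\<dots> \<in> borel_measurable borel"
    by (intro borel_measurable_continuous_on_if continuous_on_arccos' continuous_on_const) auto
  finally show ?thesis .
qed

lemma mul_cont: "continuous_on UNIV (\<lambda>x::mat3. R ** x)"
  unfolding matrix_matrix_mult_def
  by (intro continuous_intros)

lemma phi_cont_in: "continuous_on UNIV (\<lambda>x::mat3. (trace (transpose \<theta> ** x) - 1) / 2)"
  unfolding matrix_matrix_mult_def trace_def
  by (intro continuous_intros) auto

lemma phi_meas: "(\<lambda>x. phi x \<theta>) \<in> borel_measurable borel"
proof -
  have "(\<lambda>x. arccos ((trace (transpose \<theta> ** x) - 1) / 2)) \<in> borel_measurable borel"
    using measurable_compose[OF borel_measurable_continuous_onI[OF phi_cont_in] arccos_meas] by (simp add: o_def)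
  then show ?thesis by (simp add: phi_def)
qed

lemma phi_range: "phi x \<theta> \<in> {min 0 c0 .. max pi c0}"
  using arccos_range[of "(trace (transpose \<theta> ** x) - 1) / 2"] pi_gt_zero
  by (auto simp: phi_def)

lemma SO3_mul: "A \<in> SO3 \<Longrightarrow> B \<in> SO3 \<Longrightarrow> A ** B \<in> SO3"
  by (simp add: SO3_def orthogonal_matrix_mul det_mul)

lemma SO3_transpose: "A \<in> SO3 \<Longrightarrow> transpose A \<in> SO3"
  by (simp add: SO3_def)

lemma phi_rot: "phi (R ** x) \<theta> = phi x (transpose R ** \<theta>)"
  by (simp add: phi_def matrix_transpose_mul matrix_mul_assoc)

lemma prob_SO3_space: "prob_SO3 \<mu> \<Longrightarrow> space \<mu> = SO3"
  unfolding prob_SO3_def by (auto dest!: sets_eq_imp_space_eq simp: space_restrict_space)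

lemma phi_meas_mu: "prob_SO3 \<mu> \<Longrightarrow> (\<lambda>x. phi x \<theta>) \<in> borel_measurable \<mu>"
proof -
  have "(\<lambda>x. phi x \<theta>) \<in> borel_measurable (restrict_space borel SO3)"
    by (rule measurable_restrict_space1[OF phi_meas])
  moreover assume "prob_SO3 \<mu>"
  ultimately show ?thesis unfolding prob_SO3_def
    using measurable_cong_sets[of \<mu> "restrict_space borel SO3" borel borel]
    by auto
qed

lemma mul_meas_mu: assumes "prob_SO3 \<mu>" "R \<in> SO3"
  shows "(\<lambda>x. R ** x) \<in> measurable \<mu> (restrict_space borel SO3)"
proof -
  have "(\<lambda>x. R ** x) \<in> measurable (restrict_space borel SO3) (restrict_space borel SO3)"
    using measurable_restrict_space3[OF borel_measurable_continuous_onI[OF mul_cont[of R]], of SO3 SO3]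
      SO3_mul assms(2) by auto
  then show ?thesis using assms(1) unfolding prob_SO3_def
    using measurable_cong_sets[of \<mu> "restrict_space borel SO3" "restrict_space borel SO3" "restrict_space borel SO3"]
    by auto
qed

lemma rot_radon: assumes "prob_SO3 \<mu>" "R \<in> SO3"
  shows "radon (rot R \<mu>) \<theta> = radon \<mu> (transpose R ** \<theta>)"
proof -
  have "radon (rot R \<mu>) \<theta> = distr \<mu> borel ((\<lambda>x. phi x \<theta>) \<circ> (\<lambda>x. R ** x))"
    unfolding radon_def rot_def
    by (rule distr_distr[OF measurable_restrict_space1[OF phi_meas] mul_meas_mu[OF assms]])
  also have "\<dots> = radon \<mu> (transpose R ** \<theta>)"
    unfolding radon_def by (rule distr_cong) (auto simp: phi_rot)
  finally show ?thesis .
qed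

lemma rot_prob: assumes "prob_SO3 \<mu>" "R \<in> SO3" shows "prob_SO3 (rot R \<mu>)"
proof -
  interpret prob_space \<mu> using assms(1) by (simp add: prob_SO3_def)
  show ?thesis unfolding prob_SO3_def rot_def
    using prob_space_distr[OF mul_meas_mu[OF assms]] by simp
qed

lemma rot_P: assumes "\<mu> \<in> P_plus" "R \<in> SO3" shows "rot R \<mu> \<in> P_plus"
proof -
  have p: "prob_SO3 \<mu>" using assms(1) by (simp add: P_plus_def)
  obtain c where c: "c > 0" "\<forall>\<theta>\<in>SO3. std_meas (radon \<mu> \<theta>) \<ge> c" using assms(1) by (auto simp: P_plus_def)
  have "\<forall>\<theta>\<in>SO3. std_meas (radon (rot R \<mu>) \<theta>) \<ge> c"
    using c(2) rot_radon[OF p assms(2)] SO3_mul SO3_transpose assms(2) by simp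
  then show ?thesis using rot_prob[OF p assms(2)] c(1) by (auto simp: P_plus_def)
qed

lemma bij_rot: assumes "R \<in> SO3" shows "bij_betw (\<lambda>\<theta>. transpose R ** \<theta>) SO3 SO3"
proof (rule bij_betw_byWitness[where f'="\<lambda>\<theta>. R ** \<theta>"])
  have o: "transpose R ** R = mat 1" "R ** transpose R = mat 1"
    using assms by (auto simp: SO3_def orthogonal_matrix_def)
  show "\<forall>a\<in>SO3. R ** (transpose R ** a) = a" using o by (simp add: matrix_mul_assoc)
  show "\<forall>a\<in>SO3. transpose R ** (R ** a) = a" using o by (simp add: matrix_mul_assoc)
  show "(\<lambda>\<theta>. transpose R ** \<theta>) ` SO3 \<subseteq> SO3" using assms SO3_mul SO3_transpose by auto
  show "(\<lambda>\<theta>. R ** \<theta>) ` SO3 \<subseteq> SO3" using assms SO3_mul by auto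
qed

lemma N_h_rot:
  assumes inv: "\<forall>g \<psi>. bij_betw \<psi> SO3 SO3 \<longrightarrow> h (g \<circ> \<psi>) = h g"
    and p: "prob_SO3 \<mu>" and R: "R \<in> SO3"
  shows "N_h h \<rho> (rot R \<mu>) = N_h h \<rho> \<mu>"
proof
  fix t
  have "(\<lambda>\<theta>. N_phi \<rho> (rot R \<mu>) t \<theta>) = (\<lambda>\<theta>. N_phi \<rho> \<mu> t \<theta>) \<circ> (\<lambda>\<theta>. transpose R ** \<theta>)"
    by (rule ext) (simp add: N_phi_def rot_radon[OF p R])
  then show "N_h h \<rho> (rot R \<mu>) t = N_h h \<rho> \<mu> t"
    unfolding N_h_def using inv bij_rot[OF R] by simp
qed




lemma (in prob_space) abs_int_le:
  fixes f :: "'a \<Rightarrow> real"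
  assumes f: "f \<in> borel_measurable M" and B: "AE x in M. \<bar>f x\<bar> \<le> K"
  shows "\<bar>\<integral>x. f x \<partial>M\<bar> \<le> K"
proof -
  have i: "integrable M f" using integrable_const_bound[of f K] B f by simp
  have "(\<integral>x. f x \<partial>M) \<le> (\<integral>x. K \<partial>M)"
    using integral_mono_AE[OF i integrable_const] B by (simp add: eventually_mono)
  moreover have "(\<integral>x. -K \<partial>M) \<le> (\<integral>x. f x \<partial>M)"
  proof -
    have "AE x in M. -K \<le> f x" using B by (rule eventually_mono) auto
    then show ?thesis by (rule integral_mono_AE[OF integrable_const i])
  qed
  ultimately show ?thesis by (simp add: prob_space)
qed

lemma N_phi_bound:
  assumes rho: "real_distribution \<rho>" and noat: "\<forall>t. measure \<rho> {t} = 0" and mu: "\<mu> \<in> P_plus"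
  shows "\<exists>B. \<forall>t. \<forall>\<theta>\<in>SO3. \<bar>N_phi \<rho> \<mu> t \<theta>\<bar> \<le> B"
proof -
  interpret r: real_distribution \<rho> by (rule rho)
  have p: "prob_SO3 \<mu>" using mu by (simp add: P_plus_def)
  interpret pm: prob_space \<mu> using p by (simp add: prob_SO3_def)
  obtain c where c: "c > 0" "\<forall>\<theta>\<in>SO3. std_meas (radon \<mu> \<theta>) \<ge> c"
    using mu by (auto simp: P_plus_def)
  define lo where "lo = min 0 c0"
  define hi where "hi = max pi c0"
  define K where "K = max (max \<bar>lo\<bar> \<bar>hi\<bar>) \<bar>Inf ({}::real set)\<bar>"
  have "\<bar>N_phi \<rho> \<mu> t \<theta>\<bar> \<le> 2 * K / c" if \<theta>: "\<theta> \<in> SO3" for t \<theta>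
  proof -
    define \<nu> where "\<nu> = radon \<mu> \<theta>"
    have fm: "(\<lambda>x. phi x \<theta>) \<in> measurable \<mu> borel" by (rule phi_meas_mu[OF p])
    have nu: "real_distribution \<nu>" unfolding \<nu>_def radon_def
      using pm.real_distribution_distr fm by simp
    have cdfnu: "cdf \<nu> y = measure \<mu> ((\<lambda>x. phi x \<theta>) -` {..y} \<inter> space \<mu>)" for y
      unfolding cdf_def \<nu>_def radon_def using fm by (simp add: measure_distr)
    have lo': "\<forall>y<lo. cdf \<nu> y = 0"
    proof (intro allI impI)
      fix y assume "y < lo"
      moreover have "lo \<le> phi x \<theta>" for x using phi_range[of x \<theta>] unfolding lo_def by simp
      ultimately have "(\<lambda>x. phi x \<theta>) -` {..y} \<inter> space \<mu> = {}"
        by (metis (no_types, lifting) Int_emptyI atMost_iff linorder_not_le order_less_le_trans vimageE)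
      then show "cdf \<nu> y = 0" using cdfnu by simp
    qed
    have hi': "cdf \<nu> hi = 1"
    proof -
      have "(\<lambda>x. phi x \<theta>) -` {..hi} \<inter> space \<mu> = space \<mu>"
        using phi_range[of _ \<theta>] unfolding hi_def by fastforce
      then show ?thesis using cdfnu pm.prob_space by simp
    qed
    define T where "T = cdt \<rho> \<nu>"
    note qm = quantile[OF nu lo' hi' rho noat]
    have Tb: "\<bar>T s\<bar> \<le> K" for s using qm(2)[of s] unfolding T_def K_def by auto
    have Tm': "T \<in> borel_measurable \<rho>"
      using qm(1) measurable_cong_sets[OF r.events_eq_borel refl] unfolding T_def by simp
    have mb: "\<bar>mean_fn \<rho> T\<bar> \<le> K" unfolding mean_fn_def
      by (rule r.abs_int_le[OF Tm']) (use Tb in simp)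
    define m where "m = mean_fn \<rho> T"
    have "std_fn \<rho> T = sqrt (\<integral>t. \<bar>T t - m\<bar>\<^sup>2 \<partial>\<rho>)" by (simp add: std_fn_def m_def)
    also have "(\<integral>t. \<bar>T t - m\<bar>\<^sup>2 \<partial>\<rho>) = (\<integral>y. (y - m)\<^sup>2 \<partial>\<nu>)"
      using integral_distr[OF Tm', of "\<lambda>y. (y - m)\<^sup>2"] qm(3) by (simp add: T_def)
    also have "m = (\<integral>y. y \<partial>\<nu>)"
      using integral_distr[OF Tm', of "\<lambda>y. y"] qm(3) by (simp add: T_def m_def mean_fn_def)
    finally have "std_fn \<rho> T = std_meas \<nu>" by (simp add: std_meas_def)
    then have sd: "c \<le> std_fn \<rho> T" using c \<theta> by (simp add: \<nu>_def)
    have eq: "N_phi \<rho> \<mu> t \<theta> = (T t - mean_fn \<rho> T) / std_fn \<rho> T"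
      by (simp add: N_phi_def T_def \<nu>_def)
    have sp: "0 < std_fn \<rho> T" using sd c by simp
    have "\<bar>T t - mean_fn \<rho> T\<bar> \<le> 2 * K" using Tb[of t] mb by simp
    then have "\<bar>T t - mean_fn \<rho> T\<bar> / std_fn \<rho> T \<le> 2 * K / std_fn \<rho> T"
      using sp by (simp add: divide_right_mono)
    also have "\<dots> \<le> 2 * K / c"
      using sd c Tb[of t] by (intro divide_left_mono) auto
    finally show ?thesis using eq sp by simp
  qed
  then show ?thesis by blast
qed

lemma Nh_Linf:
  assumes rho: "real_distribution \<rho>" and noat: "\<forall>t. measure \<rho> {t} = 0" and mu: "\<mu> \<in> P_plus"
    and hb: "\<forall>B. \<exists>C. \<forall>g. (\<forall>\<theta>\<in>SO3. \<bar>g \<theta>\<bar> \<le> B) \<longrightarrow> \<bar>h g\<bar> \<le> C"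
    and meas: "N_h h \<rho> \<mu> \<in> borel_measurable borel"
  shows "N_h h \<rho> \<mu> \<in> Linf \<rho>"
proof -
  interpret r: real_distribution \<rho> by (rule rho)
  obtain B where B: "\<forall>t. \<forall>\<theta>\<in>SO3. \<bar>N_phi \<rho> \<mu> t \<theta>\<bar> \<le> B" using N_phi_bound[OF rho noat mu] by blast
  obtain C where C: "\<forall>g. (\<forall>\<theta>\<in>SO3. \<bar>g \<theta>\<bar> \<le> B) \<longrightarrow> \<bar>h g\<bar> \<le> C" using hb by blast
  have "\<bar>N_h h \<rho> \<mu> t\<bar> \<le> C" for t using B C by (simp add: N_h_def)
  moreover have "N_h h \<rho> \<mu> \<in> borel_measurable \<rho>"
    using meas measurable_cong_sets[OF r.events_eq_borel refl] by simp
  ultimately show ?thesis unfolding Linf_def by auto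
qed




theorem theorem20:
  fixes \<rho> :: "real measure" and h :: "(mat3 \<Rightarrow> real) \<Rightarrow> real" and \<mu>0 \<nu>0 :: "mat3 measure"
  assumes rho_borel: "sets \<rho> = sets borel" and rho_prob: "prob_space \<rho>"
    and rho_no_atoms: "\<forall>t. measure \<rho> {t} = 0"
    and h_bounded: "\<forall>B. \<exists>C. \<forall>g. (\<forall>\<theta>\<in>SO3. \<bar>g \<theta>\<bar> \<le> B) \<longrightarrow> \<bar>h g\<bar> \<le> C"
    and h_invariant: "\<forall>g \<psi>. bij_betw \<psi> SO3 SO3 \<longrightarrow> h (g \<circ> \<psi>) = h g"
    and mu0: "\<mu>0 \<in> P_plus" and nu0: "\<nu>0 \<in> P_plus"
    and meas_mu0: "N_h h \<rho> \<mu>0 \<in> borel_measurable borel"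
    and meas_nu0: "N_h h \<rho> \<nu>0 \<in> borel_measurable borel"
    and neq: "\<not> (AE t in \<rho>. N_h h \<rho> \<mu>0 t = N_h h \<rho> \<nu>0 t)"
  shows "(\<lambda>R. rot R \<mu>0) ` SO3 \<subseteq> P_plus \<and> (\<lambda>R. rot R \<nu>0) ` SO3 \<subseteq> P_plus \<and>
         lin_separable_Linf \<rho> (N_h h \<rho> ` ((\<lambda>R. rot R \<mu>0) ` SO3))
                               (N_h h \<rho> ` ((\<lambda>R. rot R \<nu>0) ` SO3))"
proof -
  have rho: "real_distribution \<rho>"
    using rho_prob rho_borel by (simp add: real_distribution_def real_distribution_axioms_def)
  interpret r: real_distribution \<rho> by (rule rho)
  have pm: "prob_SO3 \<mu>0" using mu0 by (simp add: P_plus_def)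
  have pn: "prob_SO3 \<nu>0" using nu0 by (simp add: P_plus_def)
  define f where "f = N_h h \<rho> \<mu>0"
  define g where "g = N_h h \<rho> \<nu>0"
  have imF: "N_h h \<rho> ` ((\<lambda>R. rot R \<mu>0) ` SO3) \<subseteq> {f}"
    using N_h_rot[OF h_invariant pm] by (auto simp: f_def)
  have imG: "N_h h \<rho> ` ((\<lambda>R. rot R \<nu>0) ` SO3) \<subseteq> {g}"
    using N_h_rot[OF h_invariant pn] by (auto simp: g_def)
  have fL: "f \<in> Linf \<rho>" unfolding f_def by (rule Nh_Linf[OF rho rho_no_atoms mu0 h_bounded meas_mu0])
  have gL: "g \<in> Linf \<rho>" unfolding g_def by (rule Nh_Linf[OF rho rho_no_atoms nu0 h_bounded meas_nu0])
  have [measurable]: "f \<in> borel_measurable \<rho>" "g \<in> borel_measurable \<rho>" using fL gL by (auto simp: Linf_def)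
  define s where "s t = sgn (f t - g t)" for t
  have sm[measurable]: "s \<in> borel_measurable \<rho>" unfolding s_def by measurable
  have s1: "\<bar>s t\<bar> \<le> 1" for t unfolding s_def by (simp add: abs_sgn_eq)
  define L where "L u = (\<integral>t. u t * s t \<partial>\<rho>)" for u :: "real \<Rightarrow> real"
  have bnd: "AE t in \<rho>. \<bar>u t * s t\<bar> \<le> B" if "AE t in \<rho>. \<bar>u t\<bar> \<le> B" for u B
    using that
  proof (rule eventually_mono)
    fix t assume "\<bar>u t\<bar> \<le> B"
    moreover have "\<bar>u t * s t\<bar> \<le> \<bar>u t\<bar>" using s1[of t] by (simp add: abs_mult mult_left_le)
    ultimately show "\<bar>u t * s t\<bar> \<le> B" by simp
  qed
  have um: "(\<lambda>t. u t * s t) \<in> borel_measurable \<rho>" if "u \<in> Linf \<rho>" for u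
    using that unfolding Linf_def by auto
  have int: "integrable \<rho> (\<lambda>t. u t * s t)" if uL: "u \<in> Linf \<rho>" for u
  proof -
    obtain B where "AE t in \<rho>. \<bar>u t\<bar> \<le> B" using uL by (auto simp: Linf_def)
    then show ?thesis using r.integrable_const_bound[OF _ um[OF uL], of B] bnd by simp
  qed
  have cl: "cont_lin_Linf \<rho> L"
    unfolding cont_lin_Linf_def
  proof (intro conjI ballI allI impI exI[of _ 1])
    fix u v assume "u \<in> Linf \<rho>" "v \<in> Linf \<rho>"
    then show "L (\<lambda>t. u t + v t) = L u + L v"
      unfolding L_def using int by (simp add: distrib_right)
  next
    fix a :: real and u
    show "L (\<lambda>t. a * u t) = a * L u" unfolding L_def by (simp add: mult.assoc)
  next
    fix u B assume u: "u \<in> Linf \<rho>" and B: "AE t in \<rho>. \<bar>u t\<bar> \<le> B"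
    show "\<bar>L u\<bar> \<le> 1 * B" unfolding L_def using r.abs_int_le[OF um[OF u] bnd[OF B]] by simp
  qed
  have dif: "L f - L g = (\<integral>t. \<bar>f t - g t\<bar> \<partial>\<rho>)"
  proof -
    have "L f - L g = (\<integral>t. f t * s t - g t * s t \<partial>\<rho>)"
      unfolding L_def using int[OF fL] int[OF gL] by simp
    also have "\<dots> = (\<integral>t. \<bar>f t - g t\<bar> \<partial>\<rho>)"
    proof (rule Bochner_Integration.integral_cong[OF refl])
      fix t
      show "f t * s t - g t * s t = \<bar>f t - g t\<bar>"
        unfolding s_def by (cases "f t - g t" "0::real" rule: linorder_cases)
          (auto simp: left_diff_distrib[symmetric] sgn_if)
    qed
    finally show ?thesis .
  qed
  have iabs: "integrable \<rho> (\<lambda>t. \<bar>f t - g t\<bar>)"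
  proof -
    have "integrable \<rho> (\<lambda>t. f t * s t - g t * s t)" using int[OF fL] int[OF gL] by simp
    moreover have "(\<lambda>t. f t * s t - g t * s t) = (\<lambda>t. \<bar>f t - g t\<bar>)"
      unfolding s_def by (rule ext, auto simp: left_diff_distrib[symmetric] sgn_if)
    ultimately show ?thesis by simp
  qed
  have pos: "0 < L f - L g"
  proof -
    have ge: "0 \<le> (\<integral>t. \<bar>f t - g t\<bar> \<partial>\<rho>)" by simp
    have ne: "(\<integral>t. \<bar>f t - g t\<bar> \<partial>\<rho>) \<noteq> 0"
    proof
      assume "(\<integral>t. \<bar>f t - g t\<bar> \<partial>\<rho>) = 0"
      then have "AE t in \<rho>. \<bar>f t - g t\<bar> = 0"
        using integral_nonneg_eq_0_iff_AE[OF iabs] by simp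
      then have "AE t in \<rho>. f t = g t" by (rule eventually_mono) simp
      then show False using neq by (simp add: f_def g_def)
    qed
    show ?thesis using ge ne dif by linarith
  qed
  have sep: "lin_separable_Linf \<rho> (N_h h \<rho> ` ((\<lambda>R. rot R \<mu>0) ` SO3)) (N_h h \<rho> ` ((\<lambda>R. rot R \<nu>0) ` SO3))"
    unfolding lin_separable_Linf_def
  proof (intro conjI exI[of _ L] exI[of _ "(L f + L g) / 2"] cl ballI)
    show "N_h h \<rho> ` ((\<lambda>R. rot R \<mu>0) ` SO3) \<subseteq> Linf \<rho>" using imF fL by auto
    show "N_h h \<rho> ` ((\<lambda>R. rot R \<nu>0) ` SO3) \<subseteq> Linf \<rho>" using imG gL by auto
    fix u assume "u \<in> N_h h \<rho> ` ((\<lambda>R. rot R \<mu>0) ` SO3)"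
    then have "u = f" using imF by auto
    then show "(L f + L g) / 2 < L u" using pos by simp
  next
    fix u assume "u \<in> N_h h \<rho> ` ((\<lambda>R. rot R \<nu>0) ` SO3)"
    then have "u = g" using imG by auto
    then show "L u < (L f + L g) / 2" using pos by simp
  qed
  show ?thesis using sep rot_P mu0 nu0 by auto
qed


end
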